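(* Let $\mu,\gamma>0$ and let $\widehat\tau$ be the killing time of a reflecting Ornstein–Uhlenbeck process on $[0,\infty)$ with drift $-\mu x$ and unit variance, killed at rate $\gamma\widehat Z$. Then $\mathbb E_x[\widehat\tau^2]<\infty$ for all $x\ge0$.
   Context: $\widehat Z=(\widehat Z_t)_{t\ge0}$ is the diffusion on $[0,\infty)$ with generator $\frac12f''(x)-\mu xf'(x)$ on $C_b^2$ functions with $f'(0+)=0$, started at $x$ under $\mathbb P_x$ (expectation $\mathbb E_x$). With $\xi$ an independent exponential random variable of rate $1$, $\widehat\tau=\inf\{t>0:\gamma\int_0^t\widehat Z_s\,ds\ge\xi\}$. *)

theory Defs
  imports "HOL-Probability.Probability"
begin

definition Cb2_neumann :: "(real \<Rightarrow> real) \<Rightarrow> (real \<Rightarrow> real) \<Rightarrow> (real \<Rightarrow> real) \<Rightarrow> bool" where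
  "Cb2_neumann f f' f'' \<longleftrightarrow>
     (\<forall>y\<ge>0. (f has_real_derivative f' y) (at y within {0..}) \<and>
             (f' has_real_derivative f'' y) (at y within {0..})) \<and>
     continuous_on {0..} f'' \<and>
     bounded (f ` {0..}) \<and> bounded (f' ` {0..}) \<and> bounded (f'' ` {0..}) \<and>
     f' 0 = 0"

definition OU_gen :: "real \<Rightarrow> (real \<Rightarrow> real) \<Rightarrow> (real \<Rightarrow> real) \<Rightarrow> real \<Rightarrow> real" where
  "OU_gen \<mu> f' f'' y = f'' y / 2 - \<mu> * y * f' y"

definition filtration_on :: "'a measure \<Rightarrow> (real \<Rightarrow> 'a measure) \<Rightarrow> bool" where
  "filtration_on M F \<longleftrightarrow>
     (\<forall>t\<ge>0. sigma_finite_subalgebra M (F t)) \<and>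
     (\<forall>s t. 0 \<le> s \<longrightarrow> s \<le> t \<longrightarrow> sets (F s) \<subseteq> sets (F t))"

text \<open>Z is a (continuous, [0,oo)-valued, adapted) solution of the martingale problem
  for the reflecting OU generator with drift -mu x, started at x:
  for every f in the domain, f(Z_t) - f(Z_0) - int_0^t Lf(Z_s) ds is an F-martingale.\<close>
definition reflecting_OU :: "'a measure \<Rightarrow> (real \<Rightarrow> 'a measure) \<Rightarrow> real \<Rightarrow> real \<Rightarrow> (real \<Rightarrow> 'a \<Rightarrow> real) \<Rightarrow> bool" where
  "reflecting_OU M F \<mu> x Z \<longleftrightarrow>
     filtration_on M F \<and>
     (\<forall>t\<ge>0. Z t \<in> borel_measurable (F t)) \<and>
     (\<forall>\<omega>\<in>space M. continuous_on {0..} (\<lambda>t. Z t \<omega>) \<and> (\<forall>t\<ge>0. Z t \<omega> \<ge> 0)) \<and>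
     (AE \<omega> in M. Z 0 \<omega> = x) \<and>
     (\<forall>f f' f''. Cb2_neumann f f' f'' \<longrightarrow>
        (let Mf = (\<lambda>t \<omega>. f (Z t \<omega>) - f (Z 0 \<omega>) - integral {0..t} (\<lambda>s. OU_gen \<mu> f' f'' (Z s \<omega>)))
         in \<forall>t\<ge>0. integrable M (Mf t) \<and>
              (\<forall>s. 0 \<le> s \<longrightarrow> s \<le> t \<longrightarrow> (AE \<omega> in M. real_cond_exp M (F s) (Mf t) \<omega> = Mf s \<omega>))))"

text \<open>Killing time: inf{t>0 : gamma * int_0^t Z_s ds >= xi}, with inf {} = oo.\<close>
definition kill_time :: "real \<Rightarrow> (real \<Rightarrow> 'a \<Rightarrow> real) \<Rightarrow> ('a \<Rightarrow> real) \<Rightarrow> 'a \<Rightarrow> ennreal" where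
  "kill_time \<gamma> Z \<xi> \<omega> =
     Inf (ennreal ` {t. t > 0 \<and> \<gamma> * integral {0..t} (\<lambda>s. Z s \<omega>) \<ge> \<xi> \<omega>})"

end

theory Submission
  imports Defs
begin

definition ff :: "real \<Rightarrow> real" where "ff y = 1 - exp (-(y^2))"
definition ff' :: "real \<Rightarrow> real" where "ff' y = 2*y*exp (-(y^2))"
definition ff'' :: "real \<Rightarrow> real" where "ff'' y = (2 - 4*y^2)*exp (-(y^2))"

lemma exp_sq_bound: "y^2 * exp (-(y^2)) \<le> (1::real)"
proof -
  have "1 + y^2 \<le> exp (y^2)" by (rule exp_ge_add_one_self)
  hence "y^2 \<le> exp (y^2)" by linarith
  thus ?thesis by (simp add: exp_minus field_simps)
qed

lemma exp_abs_bound: "\<bar>y\<bar> * exp (-(y^2)) \<le> (1::real)"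
proof -
  have "1 + y^2 \<le> exp (y^2)" by (rule exp_ge_add_one_self)
  moreover have "\<bar>y\<bar> \<le> 1 + y^2"
  proof (cases "\<bar>y\<bar> \<le> 1")
    case True thus ?thesis by (simp add: add_increasing2)
  next
    case False
    hence "\<bar>y\<bar>*1 \<le> \<bar>y\<bar>*\<bar>y\<bar>" by (intro mult_left_mono) auto
    thus ?thesis by (simp add: power2_eq_square)
  qed
  ultimately have "\<bar>y\<bar> \<le> exp (y^2)" by linarith
  thus ?thesis by (simp add: exp_minus field_simps)
qed

lemma ff_deriv: "(ff has_real_derivative ff' y) (at y)"
  unfolding ff_def ff'_def
  by (auto intro!: derivative_eq_intros simp: field_simps power2_eq_square)

lemma ff'_deriv: "(ff' has_real_derivative ff'' y) (at y)"
  unfolding ff''_def ff'_def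
  by (auto intro!: derivative_eq_intros simp: field_simps power2_eq_square)

lemma ff_range: "0 \<le> ff y" "ff y \<le> 1"
  unfolding ff_def by auto

lemma Cb2_ff: "Cb2_neumann ff ff' ff''"
  unfolding Cb2_neumann_def
proof (intro conjI allI impI)
  fix y :: real
  show "(ff has_real_derivative ff' y) (at y within {0..})"
    using ff_deriv has_field_derivative_at_within by blast
  show "(ff' has_real_derivative ff'' y) (at y within {0..})"
    using ff'_deriv has_field_derivative_at_within by blast
next
  show "continuous_on {0..} ff''" unfolding ff''_def by (intro continuous_intros)
  show "bounded (ff ` {0..})" 
    by (rule boundedI[where B=1]) (auto simp: ff_def)
  show "bounded (ff' ` {0..})"
  proof (rule boundedI[where B=2])
    fix z assume "z \<in> ff' ` {0..}"
    then obtain y where z: "z = ff' y" by auto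
    have "\<bar>ff' y\<bar> = 2 * (\<bar>y\<bar> * exp (-(y^2)))" unfolding ff'_def by (simp add: abs_mult)
    also have "\<dots> \<le> 2" using exp_abs_bound[of y] by simp
    finally show "norm z \<le> 2" using z by simp
  qed
  show "bounded (ff'' ` {0..})"
  proof (rule boundedI[where B=6])
    fix z assume "z \<in> ff'' ` {0..}"
    then obtain y where z: "z = ff'' y" by auto
    have e: "exp (-(y^2)) \<le> 1" by simp
    have "\<bar>ff'' y\<bar> \<le> 2 * exp (-(y^2)) + 4 * (y^2 * exp (-(y^2)))" unfolding ff''_def
      by (auto simp: abs_mult left_diff_distrib intro!: order_trans[OF abs_triangle_ineq4])
    also have "\<dots> \<le> 6" using exp_sq_bound[of y] e by linarith
    finally show "norm z \<le> 6" using z by simp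
  qed
  show "ff' 0 = 0" unfolding ff'_def by simp
qed

lemma OU_ff: "OU_gen \<mu> ff' ff'' y = (1 - (2 + 2*\<mu>) * y^2) * exp (-(y^2))"
  unfolding OU_gen_def ff'_def ff''_def by (simp add: field_simps power2_eq_square)

lemma OU_ff_bounds:
  assumes "\<mu> > 0" "y \<ge> 0"
  shows "0 \<le> 1 - OU_gen \<mu> ff' ff'' y" "1 - OU_gen \<mu> ff' ff'' y \<le> 3 + 2*\<mu>"
    "1 - OU_gen \<mu> ff' ff'' y \<le> (3 + 2*\<mu>) * y"
proof -
  have eq: "1 - OU_gen \<mu> ff' ff'' y = (1 - exp (-(y^2))) + (2+2*\<mu>) * (y^2 * exp (-(y^2)))"
    unfolding OU_ff by (simp add: algebra_simps)
  have e1: "exp (-(y^2)) \<le> 1" by simp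
  have e0: "0 \<le> y^2 * exp (-(y^2))" by simp
  have b1: "y^2 * exp (-(y^2)) \<le> 1" by (rule exp_sq_bound)
  have b2: "y^2 * exp (-(y^2)) \<le> y^2" using e1 by (simp add: mult_left_le)
  have b3: "1 - exp (-(y^2)) \<le> y^2"
    using exp_ge_add_one_self[of "-(y^2)"] by simp
  show "0 \<le> 1 - OU_gen \<mu> ff' ff'' y" unfolding eq using e1 e0 assms by simp
  have m: "0 \<le> (2+2*\<mu>) * (y^2 * exp (-(y^2)))" "(2+2*\<mu>) * (y^2 * exp (-(y^2))) \<le> (2+2*\<mu>)"
    "(2+2*\<mu>) * (y^2 * exp (-(y^2))) \<le> (2+2*\<mu>) * y^2"
    using assms e0 b1 b2 by (auto intro: mult_left_mono)
  show K: "1 - OU_gen \<mu> ff' ff'' y \<le> 3 + 2*\<mu>" unfolding eq using m(2) exp_gt_zero[of "-(y^2)"] by linarith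
  show "1 - OU_gen \<mu> ff' ff'' y \<le> (3 + 2*\<mu>) * y"
  proof (cases "y \<le> 1")
    case True
    have "y^2 \<le> y" using True assms by (simp add: power2_eq_square mult_left_le)
    have "1 - OU_gen \<mu> ff' ff'' y \<le> (3+2*\<mu>) * y^2" unfolding eq using m(3) b3 by (simp add: algebra_simps)
    also have "\<dots> \<le> (3+2*\<mu>) * y" using \<open>y^2 \<le> y\<close> assms by (intro mult_left_mono) auto
    finally show ?thesis .
  next
    case False
    have "3 + 2*\<mu> \<le> (3+2*\<mu>) * y" using False assms by (simp add: mult_le_cancel_left1)
    with K show ?thesis by linarith
  qed
qed

abbreviation "LL \<mu> \<equiv> OU_gen \<mu> ff' ff''"

lemma cont_LL: "continuous_on S (LL \<mu>)"
  unfolding OU_ff by (intro continuous_intros)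

lemma path_int:
  fixes p :: "real \<Rightarrow> real"
  assumes "continuous_on {0..} p" "0 \<le> a" 
  shows "(\<lambda>u. 1 - LL \<mu> (p u)) integrable_on {a..b}" "(\<lambda>u. LL \<mu> (p u)) integrable_on {a..b}"
    "p integrable_on {a..b}"
proof -
  have sub: "{a..b} \<subseteq> {0..}"
  proof
    fix x assume "x \<in> {a..b}" thus "x \<in> {0..}" using assms(2) by simp
  qed
  have c: "continuous_on {a..b} p" by (rule continuous_on_subset[OF assms(1) sub])
  have c2: "continuous_on {a..b} (\<lambda>u. LL \<mu> (p u))"
    using continuous_on_compose2[OF cont_LL c] by auto
  show "(\<lambda>u. LL \<mu> (p u)) integrable_on {a..b}" using c2 integrable_continuous_real by blast
  show "p integrable_on {a..b}" using c integrable_continuous_real by blast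
  have "continuous_on {a..b} (\<lambda>u. 1 - LL \<mu> (p u))" using c2 by (intro continuous_intros)
  thus "(\<lambda>u. 1 - LL \<mu> (p u)) integrable_on {a..b}" using integrable_continuous_real by blast
qed

lemma path_int0:
  fixes p :: "real \<Rightarrow> real"
  assumes "continuous_on {0..} p"
  shows "(\<lambda>u. 1 - LL \<mu> (p u)) integrable_on {0..b}" "(\<lambda>u. LL \<mu> (p u)) integrable_on {0..b}"
    "p integrable_on {0..b}"
  using path_int[OF assms] by auto

lemma path_C_eq:
  fixes p :: "real \<Rightarrow> real"
  assumes "continuous_on {0..} p" "0 \<le> t"
  shows "integral {0..t} (\<lambda>u. 1 - LL \<mu> (p u)) = t - integral {0..t} (\<lambda>u. LL \<mu> (p u))"
proof -
  note I = path_int0[OF assms(1)]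
  show ?thesis using integral_diff[OF integrable_const_ivl[of 1 0 t] I(2)[of \<mu> t]] assms(2) by simp
qed

lemma path_C_incr:
  fixes p :: "real \<Rightarrow> real"
  assumes "continuous_on {0..} p" "\<And>u. u \<ge> 0 \<Longrightarrow> p u \<ge> 0" "\<mu> > 0" "0 \<le> s" "s \<le> t"
  shows "integral {0..t} (\<lambda>u. 1 - LL \<mu> (p u)) - integral {0..s} (\<lambda>u. 1 - LL \<mu> (p u))
           = integral {s..t} (\<lambda>u. 1 - LL \<mu> (p u))"
    "0 \<le> integral {s..t} (\<lambda>u. 1 - LL \<mu> (p u))"
    "integral {s..t} (\<lambda>u. 1 - LL \<mu> (p u)) \<le> (3 + 2*\<mu>) * (t - s)"
proof -
  have i: "(\<lambda>u. 1 - LL \<mu> (p u)) integrable_on {0..t}" using path_int0[OF assms(1)] by blast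
  show "integral {0..t} (\<lambda>u. 1 - LL \<mu> (p u)) - integral {0..s} (\<lambda>u. 1 - LL \<mu> (p u))
           = integral {s..t} (\<lambda>u. 1 - LL \<mu> (p u))"
    using Henstock_Kurzweil_Integration.integral_combine[OF assms(4,5) i] by simp
  have i2: "(\<lambda>u. 1 - LL \<mu> (p u)) integrable_on {s..t}" using path_int[OF assms(1) assms(4)] by blast
  show "0 \<le> integral {s..t} (\<lambda>u. 1 - LL \<mu> (p u))"
  proof (rule integral_nonneg[OF i2])
    fix u assume "u \<in> {s..t}"
    hence "p u \<ge> 0" using assms(2,4) by simp
    thus "0 \<le> 1 - LL \<mu> (p u)" by (rule OU_ff_bounds(1)[OF assms(3)])
  qed
  have "integral {s..t} (\<lambda>u. 1 - LL \<mu> (p u)) \<le> integral {s..t} (\<lambda>u. 3 + 2*\<mu>)"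
  proof (rule integral_le[OF i2])
    show "(\<lambda>u. 3 + 2*\<mu>) integrable_on {s..t}" by (rule integrable_const_ivl)
    fix u assume "u \<in> {s..t}"
    hence "p u \<ge> 0" using assms(2,4) by simp
    thus "1 - LL \<mu> (p u) \<le> 3 + 2*\<mu>" by (rule OU_ff_bounds(2)[OF assms(3)])
  qed
  also have "\<dots> = (3 + 2*\<mu>) * (t - s)" using assms by simp
  finally show "integral {s..t} (\<lambda>u. 1 - LL \<mu> (p u)) \<le> (3 + 2*\<mu>) * (t - s)" .
qed

lemma path_C_le_A:
  fixes p :: "real \<Rightarrow> real"
  assumes "continuous_on {0..} p" "\<And>u. u \<ge> 0 \<Longrightarrow> p u \<ge> 0" "\<mu> > 0"
  shows "integral {0..t} (\<lambda>u. 1 - LL \<mu> (p u)) \<le> (3 + 2*\<mu>) * integral {0..t} p"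
proof -
  have "integral {0..t} (\<lambda>u. 1 - LL \<mu> (p u)) \<le> integral {0..t} (\<lambda>u. (3 + 2*\<mu>) * p u)"
  proof (rule integral_le)
    note I = path_int0[OF assms(1)]
    show "(\<lambda>u. 1 - LL \<mu> (p u)) integrable_on {0..t}" by (rule I(1))
    show "(\<lambda>u. (3 + 2*\<mu>) * p u) integrable_on {0..t}" using integrable_on_cmult_left[OF I(3), of "3+2*\<mu>"] by simp
    fix u assume "u \<in> {0..t}"
    hence "p u \<ge> 0" using assms(2) by simp
    thus "1 - LL \<mu> (p u) \<le> (3 + 2*\<mu>) * p u" by (rule OU_ff_bounds(3)[OF assms(3)])
  qed
  thus ?thesis by simp
qed

lemma integrable_bdd_mult:
  fixes h G :: "'a \<Rightarrow> real"
  assumes "integrable M h" "G \<in> borel_measurable M" "\<And>\<omega>. \<omega> \<in> space M \<Longrightarrow> \<bar>G \<omega>\<bar> \<le> 1"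
  shows "integrable M (\<lambda>\<omega>. G \<omega> * h \<omega>)"
proof (rule Bochner_Integration.integrable_bound[where f="\<lambda>\<omega>. \<bar>h \<omega>\<bar>"])
  show "integrable M (\<lambda>\<omega>. \<bar>h \<omega>\<bar>)" using assms(1) by auto
  show "(\<lambda>\<omega>. G \<omega> * h \<omega>) \<in> borel_measurable M" using assms(1,2) by auto
  show "AE \<omega> in M. norm (G \<omega> * h \<omega>) \<le> norm \<bar>h \<omega>\<bar>"
  proof (rule AE_I2)
    fix \<omega> assume "\<omega> \<in> space M"
    hence "\<bar>G \<omega>\<bar> * \<bar>h \<omega>\<bar> \<le> 1 * \<bar>h \<omega>\<bar>" using assms(3) by (intro mult_right_mono) auto
    thus "norm (G \<omega> * h \<omega>) \<le> norm \<bar>h \<omega>\<bar>" by (simp add: abs_mult)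
  qed
qed

lemma exp_quad: "0 \<le> u \<Longrightarrow> exp (-u) \<le> 1 - u + u^2/(2::real)"
proof -
  assume u: "0 \<le> u"
  define g where "g v = 1 - v + v^2/2 - exp (-v)" for v :: real
  have d: "\<And>v. (g has_real_derivative (-1 + v + exp (-v))) (at v)"
    unfolding g_def by (auto intro!: derivative_eq_intros simp: power2_eq_square field_simps)
  have nn: "0 \<le> -1 + v + exp (-v)" for v :: real
    using exp_ge_add_one_self[of "-v"] by linarith
  have "g 0 \<le> g u"
  proof (rule DERIV_nonneg_imp_nondecreasing[OF u])
    fix v assume "0 \<le> v" "v \<le> u"
    show "\<exists>y. DERIV g v :> y \<and> 0 \<le> y" using d nn by blast
  qed
  thus ?thesis unfolding g_def by simp
qed

lemma ff_meas[measurable]: "ff \<in> borel_measurable borel"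
  unfolding ff_def by measurable

locale OUs = prob_space M for M :: "'a measure" +
  fixes F :: "real \<Rightarrow> 'a measure" and \<mu> x :: real and Z :: "real \<Rightarrow> 'a \<Rightarrow> real"
  assumes mu: "\<mu> > 0" and OU: "reflecting_OU M F \<mu> x Z"
begin

definition "Mf t \<omega> = ff (Z t \<omega>) - ff (Z 0 \<omega>) - integral {0..t} (\<lambda>s. LL \<mu> (Z s \<omega>))"
definition "V t = real_cond_exp M (F t) (Mf t)"
definition "Ch t \<omega> = max 0 (t - ff (Z t \<omega>) + ff (Z 0 \<omega>) + V t \<omega>)"
definition "Cp t \<omega> = integral {0..t} (\<lambda>u. 1 - LL \<mu> (Z u \<omega>))"
definition "KK = 3 + 2*\<mu>"
definition "lam = 1 / (4 * KK^2)"
definition "qq = 1 - 1 / (8 * KK^2)"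

lemma KK_pos: "KK \<ge> 3" using mu unfolding KK_def by simp

lemma sfs: "0 \<le> t \<Longrightarrow> sigma_finite_subalgebra M (F t)"
  using OU unfolding reflecting_OU_def filtration_on_def by blast

lemma space_F: "0 \<le> t \<Longrightarrow> space (F t) = space M"
  using sfs[of t] unfolding sigma_finite_subalgebra_def subalgebra_def by blast

lemma subalg_st: "0 \<le> s \<Longrightarrow> s \<le> t \<Longrightarrow> subalgebra (F t) (F s)"
  using OU space_F[of s] space_F[of t] unfolding reflecting_OU_def filtration_on_def subalgebra_def
  by auto

lemma subalg_M: "0 \<le> t \<Longrightarrow> subalgebra M (F t)"
  using sfs[of t] unfolding sigma_finite_subalgebra_def by blast

lemma Z_F: "0 \<le> t \<Longrightarrow> Z t \<in> borel_measurable (F t)"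
  using OU unfolding reflecting_OU_def by blast

lemma Z_Fs: "0 \<le> s \<Longrightarrow> s \<le> t \<Longrightarrow> Z s \<in> borel_measurable (F t)"
  using measurable_from_subalg[OF subalg_st Z_F] by auto

lemma Z_M: "0 \<le> t \<Longrightarrow> Z t \<in> borel_measurable M"
  using measurable_from_subalg[OF subalg_M Z_F] by auto

lemma path: "\<omega> \<in> space M \<Longrightarrow> continuous_on {0..} (\<lambda>t. Z t \<omega>)"
  "\<omega> \<in> space M \<Longrightarrow> 0 \<le> u \<Longrightarrow> 0 \<le> Z u \<omega>"
  using OU unfolding reflecting_OU_def by blast+

lemma mart:
  "0 \<le> t \<Longrightarrow> integrable M (Mf t)"
  "0 \<le> s \<Longrightarrow> s \<le> t \<Longrightarrow> AE \<omega> in M. real_cond_exp M (F s) (Mf t) \<omega> = Mf s \<omega>"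
proof -
  have H: "\<forall>t\<ge>0. integrable M (Mf t) \<and>
              (\<forall>s. 0 \<le> s \<longrightarrow> s \<le> t \<longrightarrow> (AE \<omega> in M. real_cond_exp M (F s) (Mf t) \<omega> = Mf s \<omega>))"
    using OU Cb2_ff unfolding reflecting_OU_def Let_def Mf_def[abs_def] by blast
  show "0 \<le> t \<Longrightarrow> integrable M (Mf t)" using H by blast
  show "0 \<le> s \<Longrightarrow> s \<le> t \<Longrightarrow> AE \<omega> in M. real_cond_exp M (F s) (Mf t) \<omega> = Mf s \<omega>"
    using H by auto
qed

lemma V_meas: "0 \<le> t \<Longrightarrow> V t \<in> borel_measurable (F t)"
  unfolding V_def by (rule borel_measurable_cond_exp)

lemma V_M: "0 \<le> t \<Longrightarrow> V t \<in> borel_measurable M"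
  using measurable_from_subalg[OF subalg_M V_meas] by auto

lemma V_int: "0 \<le> t \<Longrightarrow> integrable M (V t)"
  unfolding V_def using sigma_finite_subalgebra.real_cond_exp_int(1)[OF sfs mart(1)] by blast

lemma V_AE: "0 \<le> t \<Longrightarrow> AE \<omega> in M. V t \<omega> = Mf t \<omega>"
  unfolding V_def using mart(2)[of t t] by simp

lemma Cp_eq: "\<omega> \<in> space M \<Longrightarrow> 0 \<le> t \<Longrightarrow> Cp t \<omega> = t - ff (Z t \<omega>) + ff (Z 0 \<omega>) + Mf t \<omega>"
  unfolding Cp_def Mf_def using path_C_eq[OF path(1)] by simp

lemma Cp_nonneg: "\<omega> \<in> space M \<Longrightarrow> 0 \<le> t \<Longrightarrow> 0 \<le> Cp t \<omega>"
  unfolding Cp_def using path_C_incr(2)[OF path(1) path(2) mu, of \<omega> 0 t] by simp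

lemma Ch_AE: assumes t: "0 \<le> t" shows "AE \<omega> in M. Ch t \<omega> = Cp t \<omega>"
  using V_AE[OF t] AE_space
proof eventually_elim
  case (elim \<omega>)
  thus ?case using Cp_eq[OF elim(2)] Cp_nonneg[OF elim(2)] \<open>0 \<le> t\<close> unfolding Ch_def
    by (simp add: max_def)
qed

lemma Ch_meas: "0 \<le> t \<Longrightarrow> Ch t \<in> borel_measurable (F t)"
proof -
  assume t: "0 \<le> t"
  note [measurable] = Z_F[OF t] Z_Fs[OF order_refl t] V_meas[OF t]
  show ?thesis unfolding Ch_def by measurable
qed

lemma Ch_M: "0 \<le> t \<Longrightarrow> Ch t \<in> borel_measurable M"
  using measurable_from_subalg[OF subalg_M Ch_meas] by auto

end

context OUs begin

lemma lam_qq: "1 + 2 * lam^2 * KK^2 - lam = qq" "0 < lam" "lam * (2*KK) \<le> 1"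
proof -
  have K: "KK \<ge> 3" by (rule KK_pos)
  show "1 + 2 * lam^2 * KK^2 - lam = qq" unfolding lam_def qq_def using K
    by (simp add: field_simps power2_eq_square)
  show "0 < lam" unfolding lam_def using K by simp
  show "lam * (2*KK) \<le> 1" unfolding lam_def using K by (simp add: field_simps power2_eq_square)
qed

lemma step:
  assumes s: "0 \<le> s"
  shows "(\<integral>\<omega>. exp (- lam * Ch (s+2) \<omega>) \<partial>M) \<le> qq * (\<integral>\<omega>. exp (- lam * Ch s \<omega>) \<partial>M)"
proof -
  define t where "t = s + 2"
  have t: "0 \<le> t" "s \<le> t" using s by (auto simp: t_def)
  interpret S: sigma_finite_subalgebra M "F s" by (rule sfs[OF s])
  note [measurable] = Z_Fs[OF order_refl s] Z_Fs[OF s order_refl] V_meas[OF s] Ch_meas[OF s]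
    Z_M[OF s] Z_M[OF t(1)] V_M[OF s] V_M[OF t(1)] Ch_M[OF s] Ch_M[OF t(1)]
  define G where "G \<omega> = exp (- lam * Ch s \<omega>)" for \<omega>
  have G_F[measurable]: "G \<in> borel_measurable (F s)" unfolding G_def by measurable
  have G_M[measurable]: "G \<in> borel_measurable M" unfolding G_def by measurable
  have Ch_nn: "0 \<le> Ch u \<omega>" for u \<omega> unfolding Ch_def by simp
  have G_b: "0 < G \<omega>" "G \<omega> \<le> 1" for \<omega>
    unfolding G_def using lam_qq(2) Ch_nn[of s \<omega>] by (auto simp: mult_nonneg_nonneg)
  have G_abs: "\<bar>G \<omega>\<bar> \<le> 1" for \<omega> using G_b[of \<omega>] by simp
  define W where "W \<omega> = 2 - ff (Z t \<omega>) + ff (Z s \<omega>)" for \<omega>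
  have W_M[measurable]: "W \<in> borel_measurable M" unfolding W_def by measurable
  have W_b: "1 \<le> W \<omega>" "W \<omega> \<le> 3" for \<omega> unfolding W_def using ff_range[of "Z t \<omega>"] ff_range[of "Z s \<omega>"] by auto
  define Dh where "Dh \<omega> = W \<omega> + V t \<omega> - V s \<omega>" for \<omega>
  have Dh_M[measurable]: "Dh \<in> borel_measurable M" unfolding Dh_def by measurable
  have W_int: "integrable M W"
  proof -
    have "\<bar>W \<omega>\<bar> \<le> 3" for \<omega> using W_b[of \<omega>] by simp
    thus ?thesis by (intro integrable_const_bound[where B=3]) auto
  qed
  have Vt_int: "integrable M (V t)" by (rule V_int[OF t(1)])
  have Vs_int: "integrable M (V s)" by (rule V_int[OF s])
  have GW_int: "integrable M (\<lambda>\<omega>. G \<omega> * W \<omega>)" by (rule integrable_bdd_mult[OF W_int G_M G_abs])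
  have GVt_int: "integrable M (\<lambda>\<omega>. G \<omega> * V t \<omega>)" by (rule integrable_bdd_mult[OF Vt_int G_M G_abs])
  have GVs_int: "integrable M (\<lambda>\<omega>. G \<omega> * V s \<omega>)" by (rule integrable_bdd_mult[OF Vs_int G_M G_abs])
  have Mft_int: "integrable M (Mf t)" by (rule mart(1)[OF t(1)])
  have Mft_M[measurable]: "Mf t \<in> borel_measurable M" using Mft_int by blast
  have GMft_int: "integrable M (\<lambda>\<omega>. G \<omega> * Mf t \<omega>)" by (rule integrable_bdd_mult[OF Mft_int G_M G_abs])
  have GDh_int: "integrable M (\<lambda>\<omega>. G \<omega> * Dh \<omega>)"
    unfolding Dh_def distrib_left right_diff_distrib using GW_int GVt_int GVs_int by auto
  have G_int: "integrable M G" using G_abs by (intro integrable_const_bound[where B=1]) auto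
  have E_int: "integrable M (\<lambda>\<omega>. exp (- lam * Ch t \<omega>))"
  proof -
    have "\<bar>exp (- lam * Ch t \<omega>)\<bar> \<le> 1" for \<omega> using lam_qq(2) Ch_nn[of t \<omega>] by (simp add: mult_nonneg_nonneg)
    thus ?thesis by (intro integrable_const_bound[where B=1]) auto
  qed
  have c1: "(\<integral>\<omega>. G \<omega> * V t \<omega> \<partial>M) = (\<integral>\<omega>. G \<omega> * Mf t \<omega> \<partial>M)"
    by (intro integral_cong_AE) (use V_AE[OF t(1)] in auto)
  also have "\<dots> = (\<integral>\<omega>. G \<omega> * real_cond_exp M (F s) (Mf t) \<omega> \<partial>M)"
    using S.real_cond_exp_intg(2)[OF GMft_int G_F Mft_M] by simp
  also have "\<dots> = (\<integral>\<omega>. G \<omega> * Mf s \<omega> \<partial>M)"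
    by (intro integral_cong_AE) (use mart(2)[OF s t(2)] mart(1)[OF s] in auto)
  also have "\<dots> = (\<integral>\<omega>. G \<omega> * V s \<omega> \<partial>M)"
    by (intro integral_cong_AE) (use V_AE[OF s] mart(1)[OF s] in auto)
  finally have canc: "(\<integral>\<omega>. G \<omega> * V t \<omega> \<partial>M) = (\<integral>\<omega>. G \<omega> * V s \<omega> \<partial>M)" .
  have GDh: "(\<integral>\<omega>. G \<omega> * Dh \<omega> \<partial>M) = (\<integral>\<omega>. G \<omega> * W \<omega> \<partial>M)"
  proof -
    have "(\<integral>\<omega>. G \<omega> * Dh \<omega> \<partial>M) = (\<integral>\<omega>. G \<omega> * W \<omega> + G \<omega> * V t \<omega> - G \<omega> * V s \<omega> \<partial>M)"
      unfolding Dh_def by (simp add: algebra_simps)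
    also have "\<dots> = (\<integral>\<omega>. G \<omega> * W \<omega> \<partial>M) + (\<integral>\<omega>. G \<omega> * V t \<omega> \<partial>M) - (\<integral>\<omega>. G \<omega> * V s \<omega> \<partial>M)"
      using GW_int GVt_int GVs_int by simp
    finally show ?thesis using canc by simp
  qed
  have GW_ge: "(\<integral>\<omega>. G \<omega> \<partial>M) \<le> (\<integral>\<omega>. G \<omega> * W \<omega> \<partial>M)"
  proof (rule integral_mono[OF G_int GW_int])
    fix \<omega> show "G \<omega> \<le> G \<omega> * W \<omega>" using G_b[of \<omega>] W_b[of \<omega>] mult_left_mono[of 1 "W \<omega>" "G \<omega>"] by simp
  qed
  have AEb: "AE \<omega> in M. exp (- lam * Ch t \<omega>) \<le> G \<omega> * (1 + 2 * lam^2 * KK^2) - lam * (G \<omega> * Dh \<omega>)"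
    using Ch_AE[OF t(1)] Ch_AE[OF s] V_AE[OF t(1)] V_AE[OF s] AE_space
  proof eventually_elim
    case (elim \<omega>)
    have D: "Dh \<omega> = Cp t \<omega> - Cp s \<omega>"
      unfolding Dh_def W_def using elim Cp_eq[OF elim(5) t(1)] Cp_eq[OF elim(5) s] by (simp add: t_def)
    have p1: "Cp t \<omega> - Cp s \<omega> = integral {s..t} (\<lambda>u. 1 - LL \<mu> (Z u \<omega>))"
      "0 \<le> integral {s..t} (\<lambda>u. 1 - LL \<mu> (Z u \<omega>))"
      "integral {s..t} (\<lambda>u. 1 - LL \<mu> (Z u \<omega>)) \<le> (3 + 2*\<mu>) * (t - s)"
      unfolding Cp_def using path_C_incr[OF path(1)[OF elim(5)] path(2)[OF elim(5)] mu s t(2)] by auto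
    have D0: "0 \<le> Dh \<omega>" and D1: "Dh \<omega> \<le> 2 * KK" using D p1 unfolding KK_def t_def by auto
    have u0: "0 \<le> lam * Dh \<omega>" using D0 lam_qq(2) by simp
    have u1: "lam * Dh \<omega> \<le> lam * (2*KK)" using D1 lam_qq(2) by (simp add: mult_left_mono)
    have sq: "(lam * Dh \<omega>)^2 \<le> (lam * (2*KK))^2" using power_mono[OF u1 u0, of 2] by simp
    have e: "exp (- (lam * Dh \<omega>)) \<le> 1 - lam * Dh \<omega> + (lam * Dh \<omega>)^2/2" by (rule exp_quad[OF u0])
    also have "\<dots> \<le> 1 - lam * Dh \<omega> + 2 * lam^2 * KK^2" using sq by (simp add: power_mult_distrib)
    finally have e2: "exp (- (lam * Dh \<omega>)) \<le> 1 + 2 * lam^2 * KK^2 - lam * Dh \<omega>" by simp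
    have "Ch t \<omega> = Ch s \<omega> + Dh \<omega>" using D elim by simp
    hence "exp (- lam * Ch t \<omega>) = G \<omega> * exp (- (lam * Dh \<omega>))"
      unfolding G_def by (simp add: algebra_simps exp_add[symmetric])
    also have "\<dots> \<le> G \<omega> * (1 + 2 * lam^2 * KK^2 - lam * Dh \<omega>)"
      using e2 G_b[of \<omega>] by (intro mult_left_mono) auto
    finally show ?case by (simp add: algebra_simps)
  qed
  have "(\<integral>\<omega>. exp (- lam * Ch t \<omega>) \<partial>M)
      \<le> (\<integral>\<omega>. G \<omega> * (1 + 2 * lam^2 * KK^2) - lam * (G \<omega> * Dh \<omega>) \<partial>M)"
    using E_int G_int GDh_int AEb by (intro integral_mono_AE) auto
  also have "\<dots> = (1 + 2 * lam^2 * KK^2) * (\<integral>\<omega>. G \<omega> \<partial>M) - lam * (\<integral>\<omega>. G \<omega> * Dh \<omega> \<partial>M)"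
    using G_int GDh_int by simp
  also have "\<dots> \<le> (1 + 2 * lam^2 * KK^2) * (\<integral>\<omega>. G \<omega> \<partial>M) - lam * (\<integral>\<omega>. G \<omega> \<partial>M)"
    using GDh GW_ge lam_qq(2) by (simp add: mult_left_mono)
  also have "\<dots> = qq * (\<integral>\<omega>. G \<omega> \<partial>M)" using lam_qq(1) by (simp add: algebra_simps)
  finally show ?thesis unfolding t_def G_def by simp
qed

end

context OUs begin

lemma qq_bounds: "0 < qq" "qq < 1"
proof -
  have K: "3 \<le> KK" by (rule KK_pos)
  hence "9 \<le> KK * KK" using mult_mono[OF K K] by simp
  thus "0 < qq" "qq < 1" unfolding qq_def using K by (auto simp: field_simps power2_eq_square)
qed

lemma Ch_nn': "0 \<le> Ch u \<omega>" unfolding Ch_def by simp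

lemma E_int: "0 \<le> t \<Longrightarrow> integrable M (\<lambda>\<omega>. exp (- lam * Ch t \<omega>))"
proof -
  assume t: "0 \<le> t"
  note [measurable] = Ch_M[OF t]
  have "\<bar>exp (- lam * Ch t \<omega>)\<bar> \<le> 1" for \<omega> using lam_qq(2) Ch_nn'[of t \<omega>] by (simp add: mult_nonneg_nonneg)
  thus ?thesis by (intro integrable_const_bound[where B=1]) auto
qed

lemma iter: "(\<integral>\<omega>. exp (- lam * Ch (2 * real n) \<omega>) \<partial>M) \<le> qq ^ n"
proof (induction n)
  case 0
  have "(\<integral>\<omega>. exp (- lam * Ch 0 \<omega>) \<partial>M) \<le> (\<integral>\<omega>. 1 \<partial>M)"
    using E_int[of 0] lam_qq(2) Ch_nn'
    by (intro integral_mono) (auto simp: mult_nonneg_nonneg)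
  thus ?case by (simp add: prob_space)
next
  case (Suc n)
  have "(\<integral>\<omega>. exp (- lam * Ch (2 * real (Suc n)) \<omega>) \<partial>M) = (\<integral>\<omega>. exp (- lam * Ch (2 * real n + 2) \<omega>) \<partial>M)"
    by (simp add: algebra_simps)
  also have "\<dots> \<le> qq * (\<integral>\<omega>. exp (- lam * Ch (2 * real n) \<omega>) \<partial>M)" by (rule step) simp
  also have "\<dots> \<le> qq * qq ^ n" using Suc qq_bounds by (intro mult_left_mono) auto
  finally show ?case by simp
qed

end

context OUs begin

definition "bet = - ln qq"
definition "aa = bet / (2 * lam * KK)"

lemma bet_pos: "0 < bet" unfolding bet_def using qq_bounds by simp
lemma aa_pos: "0 < aa" unfolding aa_def using bet_pos lam_qq(2) KK_pos by simp
lemma qq_exp: "qq = exp (- bet)" unfolding bet_def using qq_bounds by simp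
lemma lam_aa: "lam * KK * aa = bet / 2" unfolding aa_def using lam_qq(2) KK_pos by (simp add: field_simps)

definition "J \<gamma> \<xi> n \<omega> = (if n = 0 then 1 else
   ennreal (indicator {\<omega>\<in>space M. \<gamma> * aa * real n < \<xi> \<omega>} \<omega>) +
   ennreal (exp (lam * KK * aa * real n) * exp (- lam * Ch (2 * real n) \<omega>)))"

lemma J_meas:
  assumes "\<xi> \<in> borel_measurable M"
  shows "J \<gamma> \<xi> n \<in> borel_measurable M"
proof -
  note [measurable] = assms Ch_M[of "2 * real n"]
  have "{\<omega>\<in>space M. \<gamma> * aa * real n < \<xi> \<omega>} \<in> sets M" by measurable
  thus ?thesis unfolding J_def by measurable
qed

lemma J_int_bound:
  assumes D: "distributed M lborel \<xi> (exponential_density 1)" and g: "0 < \<gamma>"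
  shows "(\<integral>\<^sup>+\<omega>. J \<gamma> \<xi> n \<omega> \<partial>M) \<le> ennreal (exp (-\<gamma>*aa) ^ n + exp (- bet/2) ^ n)"
proof (cases "n = 0")
  case True
  thus ?thesis unfolding J_def by (simp add: emeasure_space_1)
next
  case False
  have xm[measurable]: "\<xi> \<in> borel_measurable M" using distributed_measurable[OF D] by simp
  note [measurable] = Ch_M[of "2 * real n"]
  define S where "S = {\<omega>\<in>space M. \<gamma> * aa * real n < \<xi> \<omega>}"
  have S[measurable]: "S \<in> sets M" unfolding S_def by measurable
  define c where "c = exp (lam * KK * aa * real n)"
  have c: "0 < c" unfolding c_def by simp
  have "(\<integral>\<^sup>+\<omega>. J \<gamma> \<xi> n \<omega> \<partial>M) = (\<integral>\<^sup>+\<omega>. ennreal (indicator S \<omega>) + ennreal (c * exp (- lam * Ch (2 * real n) \<omega>)) \<partial>M)"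
    unfolding J_def S_def c_def using False by simp
  also have "\<dots> = (\<integral>\<^sup>+\<omega>. ennreal (indicator S \<omega>) \<partial>M) + (\<integral>\<^sup>+\<omega>. ennreal (c * exp (- lam * Ch (2 * real n) \<omega>)) \<partial>M)"
    by (rule nn_integral_add) measurable
  also have "(\<integral>\<^sup>+\<omega>. ennreal (indicator S \<omega>) \<partial>M) = emeasure M S"
    unfolding ennreal_indicator using S by simp
  also have "\<dots> = ennreal (exp (-\<gamma>*aa) ^ n)"
  proof -
    have "emeasure M S = ennreal (measure M S)" by (simp add: emeasure_eq_measure)
    also have "measure M S = exp (- (\<gamma> * aa * real n) * 1)"
      unfolding S_def using exponential_distributedD_gt[OF D, of "\<gamma> * aa * real n"] g aa_pos by simp
    also have "\<dots> = exp (-\<gamma>*aa) ^ n" by (simp add: exp_of_nat_mult[symmetric] algebra_simps)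
    finally show ?thesis .
  qed
  also have "(\<integral>\<^sup>+\<omega>. ennreal (c * exp (- lam * Ch (2 * real n) \<omega>)) \<partial>M)
      = ennreal (\<integral>\<omega>. c * exp (- lam * Ch (2 * real n) \<omega>) \<partial>M)"
    using E_int[of "2 * real n"] c by (intro nn_integral_eq_integral) auto
  also have "ennreal (\<integral>\<omega>. c * exp (- lam * Ch (2 * real n) \<omega>) \<partial>M) \<le> ennreal (exp (- bet/2) ^ n)"
  proof -
    have "(\<integral>\<omega>. c * exp (- lam * Ch (2 * real n) \<omega>) \<partial>M) = c * (\<integral>\<omega>. exp (- lam * Ch (2 * real n) \<omega>) \<partial>M)"
      by simp
    also have "\<dots> \<le> c * qq ^ n" using iter[of n] c by (intro mult_left_mono) auto
    also have "\<dots> = exp (- bet/2) ^ n"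
      unfolding c_def qq_exp lam_aa
      by (simp add: exp_of_nat_mult[symmetric] exp_add[symmetric] power_mult_distrib[symmetric] field_simps)
    finally show ?thesis by (rule ennreal_leI)
  qed
  finally show ?thesis by (simp add: ennreal_plus)
qed

end

lemma sum_odd: "(\<Sum>n<k. 2 * real n + 1) = real k ^ 2"
  by (induction k) (auto simp: power2_eq_square algebra_simps)

lemma sum_lower:
  fixes j :: "nat \<Rightarrow> ennreal"
  assumes "\<And>n. n < k \<Longrightarrow> 1 \<le> j n"
  shows "ennreal (4 * real k ^ 2) \<le> (\<Sum>n. ennreal (4 * (2 * real n + 1)) * j n)"
proof -
  have "ennreal (4 * real k ^ 2) = (\<Sum>n<k. ennreal (4 * (2 * real n + 1)))"
  proof -
    have "(\<Sum>n<k. 4 * (2 * real n + 1)) = 4 * real k ^ 2"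
      unfolding sum_distrib_left[symmetric] sum_odd ..
    thus ?thesis by (subst sum_ennreal) auto
  qed
  also have "\<dots> \<le> (\<Sum>n<k. ennreal (4 * (2 * real n + 1)) * j n)"
  proof (rule sum_mono)
    fix n assume "n \<in> {..<k}"
    hence "1 \<le> j n" using assms by simp
    thus "ennreal (4 * (2 * real n + 1)) \<le> ennreal (4 * (2 * real n + 1)) * j n"
      using mult_left_mono[of 1 "j n" "ennreal (4 * (2 * real n + 1))"] by simp
  qed
  also have "\<dots> \<le> (\<Sum>n. ennreal (4 * (2 * real n + 1)) * j n)"
    by (rule sum_le_suminf) auto
  finally show ?thesis .
qed

lemma top_from_lower:
  fixes x :: ennreal
  assumes "\<And>k. ennreal (4 * real k ^ 2) \<le> x"
  shows "x = \<top>"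
proof (rule ccontr)
  assume "x \<noteq> \<top>"
  then obtain r where r: "x = ennreal r" "0 \<le> r" by (cases x) auto
  obtain k :: nat where k: "r < real k" using reals_Archimedean2 by blast
  have "real k \<le> 4 * real k ^ 2" by (cases k) (auto simp: power2_eq_square)
  hence "r < 4 * real k ^ 2" using k by linarith
  moreover have "4 * real k ^ 2 \<le> r" using assms[of k] r by simp
  ultimately show False by simp
qed

lemma kill_bound:
  fixes j :: "nat \<Rightarrow> ennreal" and Z :: "real \<Rightarrow> 'a \<Rightarrow> real"
  assumes j0: "j 0 = 1"
    and hit: "\<And>n. 1 \<le> n \<Longrightarrow> \<gamma> * integral {0..2 * real n} (\<lambda>s. Z s \<omega>) < \<xi> \<omega> \<Longrightarrow> 1 \<le> j n"
  shows "(kill_time \<gamma> Z \<xi> \<omega>)^2 \<le> (\<Sum>n. ennreal (4 * (2 * real n + 1)) * j n)"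
proof (cases "\<exists>k. 1 \<le> k \<and> \<not> (\<gamma> * integral {0..2 * real k} (\<lambda>s. Z s \<omega>) < \<xi> \<omega>)")
  case True
  define P where "P k \<longleftrightarrow> 1 \<le> k \<and> \<not> (\<gamma> * integral {0..2 * real k} (\<lambda>s. Z s \<omega>) < \<xi> \<omega>)" for k
  define k where "k = (LEAST k. P k)"
  have Pk: "P k" unfolding k_def using True LeastI_ex[of P] unfolding P_def by blast
  have below: "1 \<le> j n" if "n < k" for n
  proof (cases "n = 0")
    case True thus ?thesis using j0 by simp
  next
    case False
    have "\<not> P n" using not_less_Least[of n P] that unfolding k_def by blast
    thus ?thesis using False hit[of n] unfolding P_def by auto
  qed
  have T: "kill_time \<gamma> Z \<xi> \<omega> \<le> ennreal (2 * real k)"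
    unfolding kill_time_def using Pk unfolding P_def
    by (intro Inf_lower imageI) auto
  have "(kill_time \<gamma> Z \<xi> \<omega>)^2 \<le> ennreal (2 * real k) ^ 2" using T by (rule power_mono) simp
  also have "\<dots> = ennreal (4 * real k ^ 2)" by (simp add: ennreal_power power_mult_distrib)
  also have "\<dots> \<le> (\<Sum>n. ennreal (4 * (2 * real n + 1)) * j n)" using below by (rule sum_lower)
  finally show ?thesis .
next
  case False
  have "ennreal (4 * real k ^ 2) \<le> (\<Sum>n. ennreal (4 * (2 * real n + 1)) * j n)" for k
  proof (rule sum_lower)
    fix n assume "n < k"
    show "1 \<le> j n"
    proof (cases "n = 0")
      case True thus ?thesis using j0 by simp
    next
      case n: False
      thus ?thesis using False hit[of n] by auto
    qed
  qed
  hence "(\<Sum>n. ennreal (4 * (2 * real n + 1)) * j n) = \<top>" by (rule top_from_lower)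
  thus ?thesis by simp
qed

lemma summable_odd_geom:
  fixes r :: real
  assumes "0 \<le> r" "r < 1"
  shows "summable (\<lambda>n. 4 * (2 * real n + 1) * r ^ n)"
proof -
  have "summable (\<lambda>n. diffs (\<lambda>_. 1::real) n * r ^ n)"
    by (rule termdiff_converges[where K=1]) (use assms in \<open>auto intro: summable_geometric\<close>)
  hence s: "summable (\<lambda>n. real (Suc n) * r ^ n)" by (simp add: diffs_def)
  have s8: "summable (\<lambda>n. 8 * (real (Suc n) * r ^ n))" by (rule summable_mult[OF s])
  show ?thesis
  proof (rule summable_comparison_test'[OF s8])
    fix n :: nat
    have "0 \<le> r ^ n" using assms by simp
    hence "4 * (2 * real n + 1) * r ^ n \<le> 8 * (real (Suc n) * r ^ n)"
      by (simp add: algebra_simps mult_right_mono)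
    thus "norm (4 * (2 * real n + 1) * r ^ n) \<le> 8 * (real (Suc n) * r ^ n)"
      using \<open>0 \<le> r ^ n\<close> by simp
  qed
qed

context OUs begin

lemma main:
  fixes \<xi> :: "'a \<Rightarrow> real" and \<gamma> :: real
  assumes g: "0 < \<gamma>" and D: "distributed M lborel \<xi> (exponential_density 1)"
  shows "(\<integral>\<^sup>+ \<omega>. (kill_time \<gamma> Z \<xi> \<omega>)\<^sup>2 \<partial>M) < \<infinity>"
proof -
  have xm[measurable]: "\<xi> \<in> borel_measurable M" using distributed_measurable[OF D] by simp
  define r1 where "r1 = exp (-\<gamma>*aa)"
  define r2 where "r2 = exp (- bet/2)"
  have r1: "0 \<le> r1" "r1 < 1" unfolding r1_def using g aa_pos by auto
  have r2: "0 \<le> r2" "r2 < 1" unfolding r2_def using bet_pos by auto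
  have hitAE: "AE \<omega> in M. \<forall>n. 1 \<le> n \<longrightarrow> \<gamma> * integral {0..2 * real n} (\<lambda>s. Z s \<omega>) < \<xi> \<omega> \<longrightarrow> 1 \<le> J \<gamma> \<xi> n \<omega>"
    unfolding AE_all_countable
  proof
    fix n :: nat
    have "AE \<omega> in M. Ch (2 * real n) \<omega> = Cp (2 * real n) \<omega>" by (rule Ch_AE) simp
    then show "AE \<omega> in M. 1 \<le> n \<longrightarrow> \<gamma> * integral {0..2 * real n} (\<lambda>s. Z s \<omega>) < \<xi> \<omega> \<longrightarrow> 1 \<le> J \<gamma> \<xi> n \<omega>"
      using AE_space
    proof eventually_elim
      case (elim \<omega>)
      show ?case
      proof (intro impI)
        assume n: "1 \<le> n" and h: "\<gamma> * integral {0..2 * real n} (\<lambda>s. Z s \<omega>) < \<xi> \<omega>"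
        define c where "c = ennreal (exp (lam * KK * aa * real n) * exp (- lam * Ch (2 * real n) \<omega>))"
        have J: "J \<gamma> \<xi> n \<omega> = ennreal (indicator {\<omega>\<in>space M. \<gamma> * aa * real n < \<xi> \<omega>} \<omega>) + c"
          unfolding J_def c_def using n by simp
        show "1 \<le> J \<gamma> \<xi> n \<omega>"
        proof (cases "\<gamma> * aa * real n < \<xi> \<omega>")
          case True
          thus ?thesis unfolding J using elim(2) by (simp add: add_increasing2)
        next
          case False
          hence "\<gamma> * integral {0..2 * real n} (\<lambda>s. Z s \<omega>) < \<gamma> * (aa * real n)" using h by simp
          hence A: "integral {0..2 * real n} (\<lambda>s. Z s \<omega>) < aa * real n" using g by simp
          have "Cp (2 * real n) \<omega> \<le> KK * integral {0..2 * real n} (\<lambda>s. Z s \<omega>)"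
            unfolding Cp_def KK_def using path_C_le_A[OF path(1)[OF elim(2)] path(2)[OF elim(2)] mu] by simp
          also have "\<dots> \<le> KK * (aa * real n)" using A KK_pos by simp
          finally have "lam * Ch (2 * real n) \<omega> \<le> lam * (KK * (aa * real n))"
            using elim(1) lam_qq(2) by simp
          hence "0 \<le> lam * KK * aa * real n + - lam * Ch (2 * real n) \<omega>" by (simp add: algebra_simps)
          hence "1 \<le> exp (lam * KK * aa * real n) * exp (- lam * Ch (2 * real n) \<omega>)"
            by (simp add: exp_add[symmetric])
          hence "1 \<le> c" unfolding c_def by (simp add: ennreal_le_iff2)
          thus ?thesis unfolding J by (simp add: add_increasing)
        qed
      qed
    qed
  qed
  have bAE: "AE \<omega> in M. (kill_time \<gamma> Z \<xi> \<omega>)\<^sup>2 \<le> (\<Sum>n. ennreal (4 * (2 * real n + 1)) * J \<gamma> \<xi> n \<omega>)"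
    using hitAE
  proof eventually_elim
    case (elim \<omega>)
    show ?case by (rule kill_bound) (use elim in \<open>auto simp: J_def\<close>)
  qed
  have "(\<integral>\<^sup>+ \<omega>. (kill_time \<gamma> Z \<xi> \<omega>)\<^sup>2 \<partial>M) \<le> (\<integral>\<^sup>+ \<omega>. (\<Sum>n. ennreal (4 * (2 * real n + 1)) * J \<gamma> \<xi> n \<omega>) \<partial>M)"
    by (rule nn_integral_mono_AE[OF bAE])
  also have "\<dots> = (\<Sum>n. (\<integral>\<^sup>+ \<omega>. ennreal (4 * (2 * real n + 1)) * J \<gamma> \<xi> n \<omega> \<partial>M))"
    by (rule nn_integral_suminf) (use J_meas[OF xm] in measurable)
  also have "\<dots> = (\<Sum>n. ennreal (4 * (2 * real n + 1)) * (\<integral>\<^sup>+ \<omega>. J \<gamma> \<xi> n \<omega> \<partial>M))"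
    by (intro suminf_cong nn_integral_cmult J_meas[OF xm])
  also have "\<dots> \<le> (\<Sum>n. ennreal (4 * (2 * real n + 1) * r1 ^ n + 4 * (2 * real n + 1) * r2 ^ n))"
  proof (rule suminf_le)
    fix n
    have "(\<integral>\<^sup>+ \<omega>. J \<gamma> \<xi> n \<omega> \<partial>M) \<le> ennreal (r1 ^ n + r2 ^ n)"
      unfolding r1_def r2_def by (rule J_int_bound[OF D g])
    hence "ennreal (4 * (2 * real n + 1)) * (\<integral>\<^sup>+ \<omega>. J \<gamma> \<xi> n \<omega> \<partial>M)
          \<le> ennreal (4 * (2 * real n + 1)) * ennreal (r1 ^ n + r2 ^ n)" by (rule mult_left_mono) simp
    also have "\<dots> = ennreal (4 * (2 * real n + 1) * r1 ^ n + 4 * (2 * real n + 1) * r2 ^ n)"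
      using r1 r2 by (subst ennreal_mult[symmetric]) (auto simp: distrib_left)
    finally show "ennreal (4 * (2 * real n + 1)) * (\<integral>\<^sup>+ \<omega>. J \<gamma> \<xi> n \<omega> \<partial>M)
          \<le> ennreal (4 * (2 * real n + 1) * r1 ^ n + 4 * (2 * real n + 1) * r2 ^ n)" .
  qed auto
  also have "\<dots> < \<infinity>"
  proof -
    have "summable (\<lambda>n. 4 * (2 * real n + 1) * r1 ^ n + 4 * (2 * real n + 1) * r2 ^ n)"
      using summable_odd_geom[OF r1] summable_odd_geom[OF r2] by (rule summable_add)
    moreover have "0 \<le> 4 * (2 * real n + 1) * r1 ^ n + 4 * (2 * real n + 1) * r2 ^ n" for n
      using r1 r2 by simp
    ultimately show ?thesis using ennreal_suminf_neq_top by (simp add: less_top[symmetric])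
  qed
  finally show ?thesis .
qed

end

theorem lemma3p11:
  fixes M :: "'a measure" and F :: "real \<Rightarrow> 'a measure"
    and Z :: "real \<Rightarrow> 'a \<Rightarrow> real" and \<xi> :: "'a \<Rightarrow> real"
    and \<mu> \<gamma> x :: real
  assumes "prob_space M"
    and "\<mu> > 0" and "\<gamma> > 0" and "x \<ge> 0"
    and "reflecting_OU M F \<mu> x Z"
    and "distributed M lborel \<xi> (exponential_density 1)"
    and "prob_space.indep_set M (sets (vimage_algebra (space M) \<xi> borel))
           (sets (vimage_algebra (space M) (\<lambda>\<omega>. restrict (\<lambda>t. Z t \<omega>) {0..}) (Pi\<^sub>M {0..} (\<lambda>_. borel))))"
  shows "(\<integral>\<^sup>+ \<omega>. (kill_time \<gamma> Z \<xi> \<omega>)\<^sup>2 \<partial>M) < \<infinity>"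
proof -
  interpret O: OUs M F \<mu> x Z
    using assms(1,2,5) by (simp add: OUs_def OUs_axioms_def)
  show ?thesis by (rule O.main[OF assms(3) assms(6)])
qed

end
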